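(* Let $n\ge 2$ and let $\Omega$ be a compact subset of $\mathbb{R}^n$. Then $\mathit{Uf}(\mathrm{conv}(\Omega))\subset \mathit{Uf}(\Omega)$, i.e. the minimal unfolded region of the convex hull of $\Omega$ is included in the minimal unfolded region of $\Omega$.
   Context: $\mathrm{conv}(\Omega)$ is the convex hull of $\Omega$; $S^{n-1}$ is the unit sphere in $\mathbb{R}^n$. For $X\subset\mathbb{R}^n$, $v\in S^{n-1}$ and $b\in\mathbb{R}$, put $X^+_{v,b}=X\cap\{x\in\mathbb{R}^n : x\cdot v>b\}$, and let $\mathrm{R}_{v,b}$ be the reflection of $\mathbb{R}^n$ in the hyperplane $\{x : x\cdot v=b\}$. For a bounded $X\subset\mathbb{R}^n$, define $l_X(v)=\inf\{a : \mathrm{R}_{v,c}(X^+_{v,c})\subset X \text{ for every } c\ge a\}$ and the minimal unfolded region $\mathit{Uf}(X)=\bigcap_{v\in S^{n-1}}\{x\in\mathbb{R}^n : x\cdot v\le l_X(v)\}$. *)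

theory Defs
  imports "HOL-Analysis.Analysis"
begin

definition upper_part :: "'a::euclidean_space set \<Rightarrow> 'a \<Rightarrow> real \<Rightarrow> 'a set" where
  "upper_part X v b = X \<inter> {x. x \<bullet> v > b}"

text \<open>Reflection in the hyperplane {x. x \<bullet> v = b}, for a unit vector v.\<close>
definition refl_hyp :: "'a::euclidean_space \<Rightarrow> real \<Rightarrow> 'a \<Rightarrow> 'a" where
  "refl_hyp v b x = x - (2 * (x \<bullet> v - b)) *\<^sub>R v"

definition l_fun :: "'a::euclidean_space set \<Rightarrow> 'a \<Rightarrow> real" where
  "l_fun X v = Inf {a. \<forall>c\<ge>a. refl_hyp v c ` upper_part X v c \<subseteq> X}"

definition Uf :: "'a::euclidean_space set \<Rightarrow> 'a set" where
  "Uf X = (\<Inter>v\<in>sphere 0 1. {x. x \<bullet> v \<le> l_fun X v})"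

end

theory Submission
  imports Defs
begin

lemma nv: "norm v = 1 \<Longrightarrow> \<bar>x \<bullet> v\<bar> \<le> norm x"
  using Cauchy_Schwarz_ineq2[of x v] by simp

lemma key:
  fixes \<Omega> :: "'a::euclidean_space set"
  assumes H: "refl_hyp v c ` upper_part \<Omega> v c \<subseteq> \<Omega>"
  shows "refl_hyp v c ` upper_part (convex hull \<Omega>) v c \<subseteq> convex hull \<Omega>"
proof -
  define A where "A = {y. \<forall>s. 0 \<le> s \<and> s \<le> 2 * max 0 (y \<bullet> v - c) \<longrightarrow> y - s *\<^sub>R v \<in> convex hull \<Omega>}"
  have cA: "convex A"
    unfolding convex_def
  proof (intro allI impI ballI)
    fix y1 y2 assume y1: "y1 \<in> A" and y2: "y2 \<in> A"
    fix u w :: real assume uw: "0 \<le> u" "0 \<le> w" "u + w = 1"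
    let ?y = "u *\<^sub>R y1 + w *\<^sub>R y2"
    define b1 where "b1 = 2 * max 0 (y1 \<bullet> v - c)"
    define b2 where "b2 = 2 * max 0 (y2 \<bullet> v - c)"
    have b1: "b1 \<ge> 0" and b2: "b2 \<ge> 0" unfolding b1_def b2_def by auto
    have yv: "?y \<bullet> v - c = u * (y1 \<bullet> v - c) + w * (y2 \<bullet> v - c)"
      using uw by (simp add: inner_add_left algebra_simps flip: distrib_left)
    have bnd: "2 * max 0 (?y \<bullet> v - c) \<le> u * b1 + w * b2"
    proof -
      have "u * (y1 \<bullet> v - c) \<le> u * max 0 (y1 \<bullet> v - c)" using uw by (intro mult_left_mono) auto
      moreover have "w * (y2 \<bullet> v - c) \<le> w * max 0 (y2 \<bullet> v - c)" using uw by (intro mult_left_mono) auto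
      ultimately show ?thesis using yv uw b1 b2 unfolding b1_def b2_def
        by (auto simp: max_def split: if_splits)
    qed
    show "?y \<in> A"
      unfolding A_def
    proof (intro CollectI allI impI)
      fix s assume s: "0 \<le> s \<and> s \<le> 2 * max 0 (?y \<bullet> v - c)"
      show "?y - s *\<^sub>R v \<in> convex hull \<Omega>"
      proof (cases "u * b1 + w * b2 = 0")
        case True
        then have "s = 0" using s bnd by auto
        have "y1 - 0 *\<^sub>R v \<in> convex hull \<Omega>" "y2 - 0 *\<^sub>R v \<in> convex hull \<Omega>"
          using y1 y2 b1 b2 unfolding A_def b1_def b2_def by auto
        then show ?thesis using \<open>s = 0\<close> uw convex_convex_hull[of \<Omega>]
          by (auto simp: convex_def)
      next
        case False
        then have pos: "u * b1 + w * b2 > 0" using uw b1 b2 by (smt (verit) mult_nonneg_nonneg)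
        define th where "th = s / (u * b1 + w * b2)"
        have th: "0 \<le> th" "th \<le> 1" unfolding th_def using s bnd pos by (auto simp: divide_simps)
        have m1: "y1 - (th * b1) *\<^sub>R v \<in> convex hull \<Omega>"
        proof -
          have "0 \<le> th * b1" "th * b1 \<le> b1" using th b1 by (auto intro: mult_nonneg_nonneg mult_left_le_one_le)
          moreover have "\<forall>s. 0 \<le> s \<and> s \<le> b1 \<longrightarrow> y1 - s *\<^sub>R v \<in> convex hull \<Omega>"
            using y1 unfolding A_def b1_def by simp
          ultimately show ?thesis by blast
        qed
        have m2: "y2 - (th * b2) *\<^sub>R v \<in> convex hull \<Omega>"
        proof -
          have "0 \<le> th * b2" "th * b2 \<le> b2" using th b2 by (auto intro: mult_nonneg_nonneg mult_left_le_one_le)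
          moreover have "\<forall>s. 0 \<le> s \<and> s \<le> b2 \<longrightarrow> y2 - s *\<^sub>R v \<in> convex hull \<Omega>"
            using y2 unfolding A_def b2_def by simp
          ultimately show ?thesis by blast
        qed
        have "u *\<^sub>R (y1 - (th * b1) *\<^sub>R v) + w *\<^sub>R (y2 - (th * b2) *\<^sub>R v) \<in> convex hull \<Omega>"
          using m1 m2 uw convex_convex_hull[of \<Omega>] by (auto simp: convex_def)
        moreover have "u *\<^sub>R (y1 - (th * b1) *\<^sub>R v) + w *\<^sub>R (y2 - (th * b2) *\<^sub>R v) = ?y - s *\<^sub>R v"
        proof -
          have "th * (u * b1 + w * b2) = s" unfolding th_def using pos by simp
          then have "u * (th * b1) + w * (th * b2) = s" by (simp add: algebra_simps)
          then show ?thesis by (simp add: algebra_simps flip: scaleR_add_left)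
        qed
        ultimately show ?thesis by simp
      qed
    qed
  qed
  have OA: "\<Omega> \<subseteq> A"
  proof
    fix p assume p: "p \<in> \<Omega>"
    show "p \<in> A" unfolding A_def
    proof (intro CollectI allI impI)
      fix s assume s: "0 \<le> s \<and> s \<le> 2 * max 0 (p \<bullet> v - c)"
      show "p - s *\<^sub>R v \<in> convex hull \<Omega>"
      proof (cases "p \<bullet> v > c")
        case False
        then have "s = 0" using s by auto
        then show ?thesis using p hull_subset[of \<Omega> convex] by auto
      next
        case True
        define d where "d = 2 * (p \<bullet> v - c)"
        have d: "d > 0" using True unfolding d_def by auto
        have R: "refl_hyp v c p \<in> \<Omega>" using H p True unfolding upper_part_def by auto
        have Rd: "refl_hyp v c p = p - d *\<^sub>R v" unfolding refl_hyp_def d_def by simp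
        define u where "u = s / d"
        have u: "0 \<le> u" "u \<le> 1" using s d True unfolding u_def d_def by (auto simp: divide_simps)
        have "(1 - u) *\<^sub>R p + u *\<^sub>R refl_hyp v c p \<in> convex hull \<Omega>"
          using p R u hull_subset[of \<Omega> convex]
          by (intro convexD[OF convex_convex_hull]) auto
        moreover have "(1 - u) *\<^sub>R p + u *\<^sub>R refl_hyp v c p = p - s *\<^sub>R v"
          using d unfolding Rd u_def by (simp add: algebra_simps)
        ultimately show ?thesis by simp
      qed
    qed
  qed
  have "convex hull \<Omega> \<subseteq> A" using OA cA by (rule hull_minimal)
  then show ?thesis
  proof (clarsimp simp: upper_part_def)
    fix x assume sub: "convex hull \<Omega> \<subseteq> A" and x: "x \<in> convex hull \<Omega>" "c < x \<bullet> v"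
    then have "x \<in> A" by auto
    then have "x - (2 * (x \<bullet> v - c)) *\<^sub>R v \<in> convex hull \<Omega>" unfolding A_def using x by auto
    then show "refl_hyp v c x \<in> convex hull \<Omega>" unfolding refl_hyp_def .
  qed
qed

theorem theorem2p4:
  fixes \<Omega> :: "'a::euclidean_space set"
  assumes "DIM('a) \<ge> 2"
    and "compact \<Omega>"
  shows "Uf (convex hull \<Omega>) \<subseteq> Uf \<Omega>"
proof (cases "\<Omega> = {}")
  case True then show ?thesis by simp
next
  case False
  have "bounded (convex hull \<Omega>)" using assms(2) compact_convex_hull compact_imp_bounded by blast
  then obtain B where B: "\<And>x. x \<in> convex hull \<Omega> \<Longrightarrow> norm x \<le> B" by (auto simp: bounded_iff)
  have BO: "\<And>x. x \<in> \<Omega> \<Longrightarrow> norm x \<le> B" by (rule B, rule hull_inc)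
  have le: "l_fun (convex hull \<Omega>) v \<le> l_fun \<Omega> v" if v: "norm v = 1" for v
    unfolding l_fun_def
  proof (rule cInf_superset_mono)
    show "{a. \<forall>c\<ge>a. refl_hyp v c ` upper_part \<Omega> v c \<subseteq> \<Omega>} \<noteq> {}"
    proof -
      have "B + 1 \<in> {a. \<forall>c\<ge>a. refl_hyp v c ` upper_part \<Omega> v c \<subseteq> \<Omega>}"
      proof (clarsimp simp: upper_part_def)
        fix c x assume "B + 1 \<le> c" "x \<in> \<Omega>" "c < x \<bullet> v"
        moreover have "x \<bullet> v \<le> norm x" using v nv by (metis abs_le_D1)
        moreover have "norm x \<le> B" using BO \<open>x \<in> \<Omega>\<close> .
        ultimately show "refl_hyp v c x \<in> \<Omega>" by linarith
      qed
      then show ?thesis by blast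
    qed
    show "bdd_below {a. \<forall>c\<ge>a. refl_hyp v c ` upper_part (convex hull \<Omega>) v c \<subseteq> convex hull \<Omega>}"
      unfolding bdd_below_def
    proof (intro exI ballI CollectI, rule ccontr)
      fix a assume a: "a \<in> {a. \<forall>c\<ge>a. refl_hyp v c ` upper_part (convex hull \<Omega>) v c \<subseteq> convex hull \<Omega>}"
        and na: "\<not> - B \<le> a"
      obtain x where x: "x \<in> \<Omega>" using False by blast
      then have xc: "x \<in> convex hull \<Omega>" by (rule hull_inc)
      have nx: "\<bar>x \<bullet> v\<bar> \<le> norm x" using v nv by blast
      have "x \<bullet> v > a" using B[OF xc] nx na by linarith
      then have R: "refl_hyp v a x \<in> convex hull \<Omega>" using a xc unfolding upper_part_def by auto
      have vv: "v \<bullet> v = 1" using v by (simp add: dot_square_norm)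
      have "refl_hyp v a x \<bullet> v = 2 * a - x \<bullet> v" unfolding refl_hyp_def
        using vv by (simp add: inner_diff_left algebra_simps)
      moreover have "\<bar>refl_hyp v a x \<bullet> v\<bar> \<le> norm (refl_hyp v a x)" using v nv by blast
      ultimately show False using B[OF R] B[OF xc] nx na by linarith
    qed
    show "{a. \<forall>c\<ge>a. refl_hyp v c ` upper_part \<Omega> v c \<subseteq> \<Omega>}
      \<subseteq> {a. \<forall>c\<ge>a. refl_hyp v c ` upper_part (convex hull \<Omega>) v c \<subseteq> convex hull \<Omega>}"
      using key by blast
  qed
  show ?thesis unfolding Uf_def
  proof clarsimp
    fix x v :: 'a assume "\<forall>v\<in>sphere 0 1. x \<bullet> v \<le> l_fun (convex hull \<Omega>) v" "norm v = 1"
    then have "x \<bullet> v \<le> l_fun (convex hull \<Omega>) v" by simp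
    also have "\<dots> \<le> l_fun \<Omega> v" using le \<open>norm v = 1\<close> .
    finally show "x \<bullet> v \<le> l_fun \<Omega> v" .
  qed
qed

end
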